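(* Let $R$ be a strict triangular $\mathcal{B}$-module algebra. Symmetric functions are quasi-symmetric: there is a canonical inclusion $\mathrm{Sym}_\infty(R)\subset\mathrm{QSym}(R)$ inside $R[[x_1,x_2,\ldots]]$.
   Context: All rings graded, power series implicitly completed. $\mathcal{B}=\mathbb{Z}\langle\phi_1,\phi_2,\ldots\rangle$ ($\phi_0=1$) is the Brouder–Frabetti–Krattenthaler Hopf algebra. A $\mathcal{B}$-module algebra $R$ is a ring with left $\mathcal{B}$-action satisfying $\phi(ab)=\sum\phi'(a)\phi''(b)$; $T=R[[x]]$ is the free left $R$-module on $x^k$ with product extending $R$'s and $xr=\sum_k\phi_k(r)x^{1+k}$. A triangular structure is an $R$-bilinear involution $\Upsilon$ of $T\otimes_RT$ satisfying the Yang–Baxter equation and compatible with multiplication and unit (as in braided Hopf algebras), given by a commutation rule $yx=\sum_{i,j\ge0}\Upsilon_{i,j}x^{1+i}y^{1+j}$ in $T\otimes_RT=R[[x,y]]$; strict means $\Upsilon_{0,0}=1$, $\Upsilon_{k,0}=0$ ($k\ge1$). It makes $R[[x_1,x_2,\ldots]]$ (limit of $T^{\otimes_Rn}$) an algebra with $x_jr=\sum\phi_k(r)x_j^{1+k}$ and $x_lx_k=\sum\Upsilon_{i,j}x_k^{1+i}x_l^{1+j}$ for $l>k$, and symmetric groups act with adjacent transpositions acting by $\Upsilon$; $\mathrm{Sym}_\infty(R)$ is the ring of invariant (symmetric) functions. For a composition $I=(i_1,\ldots,i_n)$ put $m_I=\sum_{k_1<\cdots<k_n}x_{k_1}^{i_1}\cdots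 x_{k_n}^{i_n}$; $\mathrm{QSym}(R)$ is the (completed) left $R$-module spanned freely by the $m_I$, a subalgebra of $R[[x_1,x_2,\ldots]]$. *)

theory Defs
  imports Main
begin

text \<open>
  The left action of the Brouder--Frabetti--Krattenthaler Hopf algebra B = Z<phi_1,phi_2,...>
  is given by the family phi :: nat => 'r => 'r of additive maps, with phi 0 = id
  (phi_0 = 1); words in the phi_k act by composition.

  Elements of R[[x_1,x_2,...]] (the limit of the tensor powers of T over R) are written
  uniquely in normal form  sum r_e x^e  with coefficients on the left and normal-ordered
  monomials x^e = x_{j1}^{e j1} ... x_{jn}^{e jn}, j1 < ... < jn.  We represent such an element
  by its coefficient function on exponent functions e :: nat => nat (finite support).
  Variables are indexed from 0 here: index j stands for the paper's x_{j+1}.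
  The subspace T^{(tensor n)} consists of series only involving the first n variables.
\<close>

type_synonym 'r ser = "(nat \<Rightarrow> nat) \<Rightarrow> 'r"

definition fin_supp :: "(nat \<Rightarrow> nat) \<Rightarrow> bool" where
  "fin_supp e \<longleftrightarrow> finite {j. e j \<noteq> 0}"

definition is_series :: "'r::zero ser \<Rightarrow> bool" where
  "is_series f \<longleftrightarrow> (\<forall>e. f e \<noteq> 0 \<longrightarrow> fin_supp e)"

definition in_vars :: "nat \<Rightarrow> 'r::zero ser \<Rightarrow> bool" where
  "in_vars n f \<longleftrightarrow> (\<forall>e. f e \<noteq> 0 \<longrightarrow> (\<forall>j\<ge>n. e j = 0))"

text \<open>[phi^m]_j = sum over j_1+...+j_m = j of phi_{j_1} o ... o phi_{j_m};
  it satisfies x^m b = sum_j [phi^m]_j(b) x^{m+j} in T.\<close>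
fun phipow :: "(nat \<Rightarrow> 'r \<Rightarrow> 'r) \<Rightarrow> nat \<Rightarrow> nat \<Rightarrow> 'r \<Rightarrow> 'r::comm_monoid_add" where
  "phipow \<phi> 0 j = (\<lambda>b. if j = 0 then b else 0)"
| "phipow \<phi> (Suc m) j = (\<lambda>b. \<Sum>i\<le>j. \<phi> i (phipow \<phi> m (j - i) b))"

text \<open>B-module algebra: phi_0 = 1, each phi_k additive, phi(1) = epsilon(phi) 1, and
  phi(ab) = sum phi'(a) phi''(b) for the BFK coproduct
  Delta(phi_n) = sum_{k=0}^n phi_k (tensor) [phi^{k+1}]_{n-k}
  (the convention making T = R[[x]] with x r = sum phi_k(r) x^{1+k} associative).\<close>
definition B_module_algebra :: "(nat \<Rightarrow> 'r::ring_1 \<Rightarrow> 'r) \<Rightarrow> bool" where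
  "B_module_algebra \<phi> \<longleftrightarrow>
     \<phi> 0 = id \<and>
     (\<forall>k a b. \<phi> k (a + b) = \<phi> k a + \<phi> k b) \<and>
     (\<forall>k. k \<ge> 1 \<longrightarrow> \<phi> k 1 = 0) \<and>
     (\<forall>n a b. \<phi> n (a * b) = (\<Sum>k\<le>n. \<phi> k a * phipow \<phi> (Suc k) (n - k) b))"

text \<open>Moving a scalar c to the left through a normal-ordered monomial:
  x^d c = sum_m passL d m c x^{d+m}.\<close>
definition passL :: "(nat \<Rightarrow> 'r \<Rightarrow> 'r) \<Rightarrow> (nat \<Rightarrow> nat) \<Rightarrow> (nat \<Rightarrow> nat) \<Rightarrow> 'r \<Rightarrow> 'r::comm_monoid_add" where
  "passL \<phi> d m c =
     foldr (\<lambda>j acc. phipow \<phi> (d j) (m j) acc) (sorted_list_of_set {j. d j \<noteq> 0 \<or> m j \<noteq> 0}) c"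

text \<open>A left R-linear map Upsilon on T (tensor_R) T is given by its matrix:
  Upsilon(x^a (tensor) x^b) = sum_{p,q} U a b p q x^p (tensor) x^q.
  Ups_at U k applies id^{(k)} (tensor) Upsilon (tensor) id (...) to a series, i.e. acts on
  the variables k, k+1 (the scalars produced are moved to the left through the earlier
  variables).\<close>
definition Ups_at :: "(nat \<Rightarrow> 'r \<Rightarrow> 'r) \<Rightarrow> (nat \<Rightarrow> nat \<Rightarrow> nat \<Rightarrow> nat \<Rightarrow> 'r) \<Rightarrow> nat
    \<Rightarrow> 'r::ring_1 ser \<Rightarrow> 'r ser" where
  "Ups_at \<phi> U k f = (\<lambda>e'.
     \<Sum>(d, a, b) \<in> {d. \<forall>j. (j < k \<longrightarrow> d j \<le> e' j) \<and> (k \<le> j \<longrightarrow> d j = 0)}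
                    \<times> {(a, b). U a b (e' k) (e' (Suc k)) \<noteq> 0}.
        f (\<lambda>j. if j < k then d j else if j = k then a else if j = Suc k then b else e' j)
        * passL \<phi> d (\<lambda>j. if j < k then e' j - d j else 0) (U a b (e' k) (e' (Suc k))))"

text \<open>Right multiplication of a series by a scalar r.\<close>
definition rmul :: "(nat \<Rightarrow> 'r \<Rightarrow> 'r) \<Rightarrow> 'r::ring_1 ser \<Rightarrow> 'r \<Rightarrow> 'r ser" where
  "rmul \<phi> f r = (\<lambda>e'. \<Sum>d \<in> {d. \<forall>j. d j \<le> e' j}. f d * passL \<phi> d (\<lambda>j. e' j - d j) r)"

text \<open>Multiplication of the tensor factors k and k+1 (id (tensor) mu (tensor) id).\<close>
definition merge_at :: "nat \<Rightarrow> 'r::comm_monoid_add ser \<Rightarrow> 'r ser" where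
  "merge_at k f = (\<lambda>e'. \<Sum>a\<le>e' k.
     f (\<lambda>j. if j < k then e' j else if j = k then a else if j = Suc k then e' k - a
            else e' (j - 1)))"

text \<open>Triangular structure: an R-bilinear (continuous) involution Upsilon of T (tensor_R) T
  satisfying the Yang--Baxter equation, compatible with unit and multiplication as in braided
  Hopf algebras, and given by a commutation rule
  yx = Upsilon(x (tensor) x) = sum_{i,j} Upsilon_{i,j} x^{1+i} y^{1+j}.\<close>
definition triangular :: "(nat \<Rightarrow> 'r::ring_1 \<Rightarrow> 'r) \<Rightarrow> (nat \<Rightarrow> nat \<Rightarrow> nat \<Rightarrow> nat \<Rightarrow> 'r) \<Rightarrow> bool" where
  "triangular \<phi> U \<longleftrightarrow>
     (\<forall>p q. finite {(a, b). U a b p q \<noteq> 0}) \<and>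
     (\<forall>a p q. U a 0 p q = (if p = 0 \<and> q = a then 1 else 0)) \<and>
     (\<forall>b p q. U 0 b p q = (if p = b \<and> q = 0 then 1 else 0)) \<and>
     (\<forall>q. U 1 1 0 q = 0) \<and> (\<forall>p. U 1 1 p 0 = 0) \<and>
     (\<forall>f r. in_vars 2 f \<longrightarrow> Ups_at \<phi> U 0 (rmul \<phi> f r) = rmul \<phi> (Ups_at \<phi> U 0 f) r) \<and>
     (\<forall>f. in_vars 2 f \<longrightarrow> Ups_at \<phi> U 0 (Ups_at \<phi> U 0 f) = f) \<and>
     (\<forall>f. in_vars 3 f \<longrightarrow>
        Ups_at \<phi> U 0 (Ups_at \<phi> U 1 (Ups_at \<phi> U 0 f)) =
        Ups_at \<phi> U 1 (Ups_at \<phi> U 0 (Ups_at \<phi> U 1 f))) \<and>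
     (\<forall>f. in_vars 3 f \<longrightarrow>
        Ups_at \<phi> U 0 (merge_at 0 f) = merge_at 1 (Ups_at \<phi> U 0 (Ups_at \<phi> U 1 f))) \<and>
     (\<forall>f. in_vars 3 f \<longrightarrow>
        Ups_at \<phi> U 0 (merge_at 1 f) = merge_at 0 (Ups_at \<phi> U 1 (Ups_at \<phi> U 0 f)))"

text \<open>The coefficients Upsilon_{i,j} of the commutation rule.\<close>
definition Ups_coeff :: "(nat \<Rightarrow> nat \<Rightarrow> nat \<Rightarrow> nat \<Rightarrow> 'r) \<Rightarrow> nat \<Rightarrow> nat \<Rightarrow> 'r" where
  "Ups_coeff U i j = U 1 1 (Suc i) (Suc j)"

definition strict_triangular :: "(nat \<Rightarrow> 'r::ring_1 \<Rightarrow> 'r) \<Rightarrow> (nat \<Rightarrow> nat \<Rightarrow> nat \<Rightarrow> nat \<Rightarrow> 'r) \<Rightarrow> bool" where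
  "strict_triangular \<phi> U \<longleftrightarrow> triangular \<phi> U \<and>
     Ups_coeff U 0 0 = 1 \<and> (\<forall>k\<ge>1. Ups_coeff U k 0 = 0)"

definition Sym_inf :: "(nat \<Rightarrow> 'r::ring_1 \<Rightarrow> 'r) \<Rightarrow> (nat \<Rightarrow> nat \<Rightarrow> nat \<Rightarrow> nat \<Rightarrow> 'r) \<Rightarrow> 'r ser set" where
  "Sym_inf \<phi> U = {f. is_series f \<and> (\<forall>k. Ups_at \<phi> U k f = f)}"

definition comp_of :: "(nat \<Rightarrow> nat) \<Rightarrow> nat list" where
  "comp_of e = map e (sorted_list_of_set {j. e j \<noteq> 0})"

definition m_qsym :: "nat list \<Rightarrow> 'r::zero_neq_one ser" where
  "m_qsym I = (\<lambda>e. if fin_supp e \<and> comp_of e = I then 1 else 0)"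

text \<open>The (completed) left R-linear combination sum_I c_I m_I, computed coefficientwise
  (each normal-ordered monomial occurs in exactly one m_I, namely I = comp_of e).\<close>
definition qsym_comb :: "(nat list \<Rightarrow> 'r::ring_1) \<Rightarrow> 'r ser" where
  "qsym_comb c = (\<lambda>e. c (comp_of e) * m_qsym (comp_of e) e)"

definition QSym :: "'r::ring_1 ser set" where
  "QSym = range qsym_comb"

end

theory Submission
  imports Defs
begin

lemma phi_zero:
  assumes "B_module_algebra \<phi>" shows "\<phi> k 0 = 0"
proof -
  have "\<phi> k (0 + 0) = \<phi> k 0 + \<phi> k 0" using assms unfolding B_module_algebra_def by blast
  then show ?thesis by simp
qed

lemma phipow_zero:
  assumes "B_module_algebra \<phi>" shows "phipow \<phi> n j 0 = 0"
  by (induction n arbitrary: j) (simp_all add: phi_zero[OF assms])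

lemma phipow_one:
  assumes "B_module_algebra \<phi>" shows "phipow \<phi> n j 1 = (if j = 0 then 1 else 0)"
proof (induction n arbitrary: j)
  case 0 then show ?case by simp
next
  case (Suc n)
  have "phipow \<phi> (Suc n) j 1 = (\<Sum>i\<le>j. if i = j then \<phi> j 1 else 0)"
    unfolding phipow.simps(2) by (rule sum.cong) (auto simp: Suc phi_zero[OF assms])
  also have "\<dots> = \<phi> j 1" by simp
  also have "\<dots> = (if j = 0 then 1 else 0)"
    using assms unfolding B_module_algebra_def by (cases j) auto
  finally show ?case .
qed

lemma foldr_phipow_zero:
  assumes "B_module_algebra \<phi>"
  shows "foldr (\<lambda>j acc. phipow \<phi> (d j) (m j) acc) L 0 = 0"
  by (induction L) (simp_all add: phipow_zero[OF assms])

lemma foldr_phipow_one: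
  assumes "B_module_algebra \<phi>"
  shows "foldr (\<lambda>j acc. phipow \<phi> (d j) (m j) acc) L 1 = (if \<forall>j\<in>set L. m j = 0 then 1 else 0)"
  by (induction L) (auto simp: phipow_zero[OF assms] phipow_one[OF assms])

lemma passL_zero:
  assumes "B_module_algebra \<phi>" shows "passL \<phi> d m 0 = 0"
  unfolding passL_def by (rule foldr_phipow_zero[OF assms])

lemma passL_one:
  assumes "B_module_algebra \<phi>" and "finite {j. d j \<noteq> 0 \<or> m j \<noteq> 0}"
  shows "passL \<phi> d m 1 = (if \<forall>j. m j = 0 then 1 else 0)"
  unfolding passL_def foldr_phipow_one[OF assms(1)] using assms(2) by auto

lemma sum_single_times:
  "sum h ({c} \<times> B) = sum (\<lambda>y. h (c, y)) B"
proof -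
  have "{c} \<times> B = Pair c ` B" by auto
  then show ?thesis by (simp add: sum.reindex inj_on_def)
qed

lemma Ups0:
  "Ups_at \<phi> U 0 g e' = (\<Sum>(a, b)\<in>{(a, b). U a b (e' 0) (e' (Suc 0)) \<noteq> 0}.
     g (\<lambda>j. if j = 0 then a else if j = Suc 0 then b else e' j) * U a b (e' 0) (e' (Suc 0)))"
proof -
  have D: "{d::nat\<Rightarrow>nat. \<forall>j. (j < 0 \<longrightarrow> d j \<le> e' j) \<and> (0 \<le> j \<longrightarrow> d j = 0)} = {\<lambda>_. 0}"
    by auto
  have P: "passL \<phi> (\<lambda>_. 0) (\<lambda>j. 0) c = c" for c unfolding passL_def by simp
  show ?thesis unfolding Ups_at_def D
    by (simp add: sum_single_times P)
qed

definition mono3 :: "nat \<Rightarrow> nat \<Rightarrow> nat \<Rightarrow> 'r::zero_neq_one ser" where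
  "mono3 a b c = (\<lambda>e. if e = (\<lambda>j. if j = 0 then a else if j = Suc 0 then b
      else if j = Suc (Suc 0) then c else 0) then 1 else 0)"

lemma mono3_eq:
  "mono3 a b c e = (if e 0 = a \<and> e (Suc 0) = b \<and> e (Suc (Suc 0)) = c \<and>
     (\<forall>j\<ge>Suc (Suc (Suc 0)). e j = 0) then 1 else 0)"
proof -
  have "e = (\<lambda>j. if j = 0 then a else if j = Suc 0 then b
      else if j = Suc (Suc 0) then c else 0) \<longleftrightarrow> e 0 = a \<and> e (Suc 0) = b \<and> e (Suc (Suc 0)) = c \<and>
     (\<forall>j\<ge>Suc (Suc (Suc 0)). e j = 0)"
  proof
    assume "e 0 = a \<and> e (Suc 0) = b \<and> e (Suc (Suc 0)) = c \<and> (\<forall>j\<ge>Suc (Suc (Suc 0)). e j = 0)"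
    then show "e = (\<lambda>j. if j = 0 then a else if j = Suc 0 then b
      else if j = Suc (Suc 0) then c else 0)"
      by (intro ext) (auto simp: not_less_eq_eq)
  qed auto
  then show ?thesis unfolding mono3_def by simp
qed

lemma mono3_in_vars: "in_vars 3 (mono3 a b c)"
  unfolding in_vars_def mono3_eq by (auto simp: numeral_3_eq_3)

lemma tri_finite: "triangular \<phi> U \<Longrightarrow> finite {(a, b). U a b p q \<noteq> 0}"
  unfolding triangular_def by blast

lemma S1_inner:
  assumes B: "B_module_algebra \<phi>" and T: "triangular \<phi> U" and e2: "e (Suc (Suc 0)) = 0"
  shows "Ups_at \<phi> U (Suc 0) (mono3 a (Suc 0) (Suc 0)) e = 0"
proof -
  have U11: "U (Suc 0) (Suc 0) p 0 = 0" for p using T unfolding triangular_def by simp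
  show ?thesis unfolding Ups_at_def
    by (rule sum.neutral) (auto simp: mono3_eq e2 U11 passL_zero[OF B])
qed

lemma S1:
  assumes B: "B_module_algebra \<phi>" and T: "triangular \<phi> U"
  shows "U (Suc a) (Suc 0) P 0 = 0"
proof -
  define f :: "'a ser" where "f = mono3 a (Suc 0) (Suc 0)"
  define ep :: "nat \<Rightarrow> nat" where "ep = (\<lambda>j. if j = 0 then P else 0)"
  have iv: "in_vars 3 f" unfolding f_def by (rule mono3_in_vars)
  have M: "Ups_at \<phi> U 0 (merge_at 0 f) ep = merge_at 1 (Ups_at \<phi> U 0 (Ups_at \<phi> U 1 f)) ep"
    using T iv unfolding triangular_def by metis
  have mg: "merge_at 0 f (\<lambda>j. if j = 0 then x else if j = Suc 0 then y else ep j)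
      = (if (x, y) = (Suc a, Suc 0) then 1 else 0)" for x y
  proof -
    have "merge_at 0 f (\<lambda>j. if j = 0 then x else if j = Suc 0 then y else ep j)
       = (\<Sum>t\<le>x. if t = a then (if (x, y) = (Suc a, Suc 0) then 1 else 0) else 0)"
      unfolding merge_at_def f_def mono3_eq
      by (rule sum.cong) (auto simp: ep_def)
    also have "\<dots> = (if (x, y) = (Suc a, Suc 0) then 1 else 0)" by auto
    finally show ?thesis .
  qed
  have L: "Ups_at \<phi> U 0 (merge_at 0 f) ep = U (Suc a) (Suc 0) P 0"
  proof -
    have "Ups_at \<phi> U 0 (merge_at 0 f) ep =
      (\<Sum>z\<in>{(x, y). U x y P 0 \<noteq> 0}. if z = (Suc a, Suc 0) then U (Suc a) (Suc 0) P 0 else 0)"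
      unfolding Ups0 by (rule sum.cong) (auto simp: mg ep_def split: if_splits)
    also have "\<dots> = U (Suc a) (Suc 0) P 0"
      using tri_finite[OF T] by auto
    finally show ?thesis .
  qed
  have R: "merge_at 1 (Ups_at \<phi> U 0 (Ups_at \<phi> U 1 f)) ep = 0"
  proof -
    have "merge_at 1 (Ups_at \<phi> U 0 (Ups_at \<phi> U 1 f)) ep = Ups_at \<phi> U 0 (Ups_at \<phi> U 1 f) ep"
    proof -
      have ep1: "ep 1 = 0" by (simp add: ep_def)
      have a: "(\<lambda>j. if j < 1 then ep j else if j = 1 then 0 else if j = Suc 1 then ep 1 - 0 else ep (j - 1)) = ep"
        by (rule ext) (auto simp: ep_def)
      show ?thesis unfolding merge_at_def ep1 
        apply (simp only: atMost_0 sum.insert)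
        apply simp
        using a[unfolded ep1] apply simp
        done
    qed
    also have "\<dots> = 0" unfolding Ups0
      by (rule sum.neutral) (auto simp: f_def S1_inner[OF B T] ep_def)
    finally show ?thesis .
  qed
  show ?thesis using M L R by simp
qed

lemma S2_inner:
  assumes B: "B_module_algebra \<phi>" and T: "triangular \<phi> U" and e2: "e (Suc (Suc 0)) = 0"
    and IH: "\<And>p. U a c p 0 = 0"
  shows "Ups_at \<phi> U (Suc 0) (Ups_at \<phi> U 0 (mono3 a c (Suc 0))) e = 0"
proof -
  have S1': "U x (Suc 0) p 0 = 0" if "x \<noteq> 0" for x p
    using S1[OF B T, of "x - 1" p] that by simp
  have Z: "Ups_at \<phi> U 0 (mono3 a c (Suc 0)) X = 0" if "X (Suc 0) = 0 \<or> X (Suc (Suc 0)) \<noteq> Suc 0" for X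
    unfolding Ups0 by (rule sum.neutral) (use that in \<open>auto simp: mono3_eq IH\<close>)
  have H: "Ups_at \<phi> U 0 (mono3 a c (Suc 0)) (\<lambda>j. if j < Suc 0 then d j else if j = Suc 0 then x else if j = Suc (Suc 0) then y else e j) *
        passL \<phi> d (\<lambda>j. if j < Suc 0 then e j - d j else 0) (U x y (e (Suc 0)) (e (Suc (Suc 0)))) = 0" for d x y
  proof (cases "x \<noteq> 0 \<and> y = Suc 0")
    case True
    then show ?thesis by (simp add: e2 S1' passL_zero[OF B])
  next
    case False
    then have "Ups_at \<phi> U 0 (mono3 a c (Suc 0)) (\<lambda>j. if j < Suc 0 then d j else if j = Suc 0 then x else if j = Suc (Suc 0) then y else e j) = 0" by (intro Z) auto
    then show ?thesis by simp
  qed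
  show ?thesis unfolding Ups_at_def[where k="Suc 0" and f="Ups_at \<phi> U 0 (mono3 a c (Suc 0))"]
    apply (rule sum.neutral)
    apply clarify
    apply (rule H)
    done
qed

lemma S2:
  assumes B: "B_module_algebra \<phi>" and T: "triangular \<phi> U" and a: "a \<noteq> 0"
  shows "U a (Suc b) P 0 = 0"
  using a
proof (induction b arbitrary: P)
  case 0
  then show ?case using S1[OF B T, of "a - 1" P] by simp
next
  case (Suc b)
  define f :: "'a ser" where "f = mono3 a (Suc b) (Suc 0)"
  define ep :: "nat \<Rightarrow> nat" where "ep = (\<lambda>j. if j = 0 then P else 0)"
  have iv: "in_vars 3 f" unfolding f_def by (rule mono3_in_vars)
  have M: "Ups_at \<phi> U 0 (merge_at 1 f) ep = merge_at 0 (Ups_at \<phi> U 1 (Ups_at \<phi> U 0 f)) ep"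
    using T iv unfolding triangular_def by metis
  have mg: "merge_at (Suc 0) f (\<lambda>j. if j = 0 then x else if j = Suc 0 then y else ep j)
      = (if (x, y) = (a, Suc (Suc b)) then 1 else 0)" for x y
  proof -
    have "merge_at (Suc 0) f (\<lambda>j. if j = 0 then x else if j = Suc 0 then y else ep j)
       = (\<Sum>t\<le>y. if t = Suc b then (if (x, y) = (a, Suc (Suc b)) then 1 else 0) else 0)"
      unfolding merge_at_def f_def mono3_eq
      by (rule sum.cong) (auto simp: ep_def)
    also have "\<dots> = (if (x, y) = (a, Suc (Suc b)) then 1 else 0)" by auto
    finally show ?thesis .
  qed
  have L: "Ups_at \<phi> U 0 (merge_at 1 f) ep = U a (Suc (Suc b)) P 0"
  proof -
    have "Ups_at \<phi> U 0 (merge_at 1 f) ep =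
      (\<Sum>z\<in>{(x, y). U x y P 0 \<noteq> 0}. if z = (a, Suc (Suc b)) then U a (Suc (Suc b)) P 0 else 0)"
      unfolding Ups0 by (rule sum.cong) (auto simp: mg ep_def split: if_splits)
    also have "\<dots> = U a (Suc (Suc b)) P 0"
      using tri_finite[OF T] by auto
    finally show ?thesis .
  qed
  have R: "merge_at 0 (Ups_at \<phi> U 1 (Ups_at \<phi> U 0 f)) ep = 0"
    unfolding merge_at_def
    by (rule sum.neutral) (auto simp: f_def ep_def S2_inner[OF B T _ Suc.IH[OF Suc.prems]])
  show ?case using M L R by simp
qed

lemma Up0:
  assumes B: "B_module_algebra \<phi>" and T: "triangular \<phi> U"
  shows "U a b p 0 = (if a = 0 \<and> b = p then 1 else 0)"
proof (cases "a = 0")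
  case True
  then show ?thesis using T unfolding triangular_def by auto
next
  case False
  show ?thesis
  proof (cases b)
    case 0
    then show ?thesis using T False unfolding triangular_def by auto
  next
    case (Suc b')
    then show ?thesis using S2[OF B T False] False by simp
  qed
qed

lemma eq_d0:
  fixes d e' :: "nat \<Rightarrow> nat"
  assumes dD: "\<forall>j. (j < k \<longrightarrow> d j \<le> e' j) \<and> (k \<le> j \<longrightarrow> d j = 0)"
  shows "(\<forall>j. (if j < k then e' j - d j else 0) = 0) \<longleftrightarrow> d = (\<lambda>j. if j < k then e' j else 0)"
proof
  assume H: "\<forall>j. (if j < k then e' j - d j else 0) = 0"
  show "d = (\<lambda>j. if j < k then e' j else 0)"
  proof
    fix j show "d j = (if j < k then e' j else 0)"
    proof (cases "j < k")
      case True
      have "e' j - d j = 0" using spec[OF H, of j] True by simp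
      moreover have "d j \<le> e' j" using dD True by blast
      ultimately show ?thesis using True by simp
    next
      case False
      then show ?thesis using dD by simp
    qed
  qed
next
  assume "d = (\<lambda>j. if j < k then e' j else 0)"
  then show "\<forall>j. (if j < k then e' j - d j else 0) = 0" by simp
qed

lemma Ups_swap:
  assumes B: "B_module_algebra \<phi>" and T: "triangular \<phi> U" and z: "e' (Suc k) = 0"
  shows "Ups_at \<phi> U k f e' =
    f (\<lambda>j. if j < k then e' j else if j = k then 0 else if j = Suc k then e' k else e' j)"
proof -
  define D where "D = {d::nat\<Rightarrow>nat. \<forall>j. (j < k \<longrightarrow> d j \<le> e' j) \<and> (k \<le> j \<longrightarrow> d j = 0)}"
  define Z where "Z = {(a, b). U a b (e' k) (e' (Suc k)) \<noteq> 0}"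
  define d0 where "d0 = (\<lambda>j. if j < k then e' j else 0)"
  define sw where "sw = (\<lambda>j. if j < k then e' j else if j = k then 0 else if j = Suc k then e' k else e' j)"
  define h where "h = (\<lambda>(d, a, b).
        f (\<lambda>j. if j < k then d j else if j = k then a else if j = Suc k then b else e' j)
        * passL \<phi> d (\<lambda>j. if j < k then e' j - d j else 0) (U a b (e' k) (e' (Suc k))))"
  have finD: "finite D"
  proof (rule finite_subset)
    show "D \<subseteq> {d. \<forall>x. (x \<in> {..<k} \<longrightarrow> d x \<in> {..(\<Sum>j<k. e' j)}) \<and> (x \<notin> {..<k} \<longrightarrow> d x = 0)}"
    proof (clarify, intro conjI allI impI)
      fix d x assume "d \<in> D" "x \<in> {..<k}"
      then have "d x \<le> e' x" "x < k" unfolding D_def by auto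
      moreover have "e' x \<le> (\<Sum>j<k. e' j)" using \<open>x < k\<close> by (intro member_le_sum) auto
      ultimately show "d x \<in> {..(\<Sum>j<k. e' j)}" by simp
    next
      fix d x assume "d \<in> D" "x \<notin> {..<k}"
      then show "d x = 0" unfolding D_def by auto
    qed
  qed (rule finite_set_of_finite_funs; simp)
  have finZ: "finite Z" unfolding Z_def by (rule tri_finite[OF T])
  have hz: "h w = (if w = (d0, 0, e' k) then f sw else 0)" if w: "w \<in> D \<times> Z" for w
  proof -
    obtain d a b where wd: "w = (d, a, b)" by (cases w) auto
    have dD: "d \<in> D" using w wd by auto
    show ?thesis
    proof (cases "a = 0 \<and> b = e' k")
      case False
      then have "U a b (e' k) (e' (Suc k)) = 0" using Up0[OF B T] z by simp
      then show ?thesis unfolding h_def wd using False by (auto simp: passL_zero[OF B])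
    next
      case True
      have fin: "finite {j. d j \<noteq> 0 \<or> (if j < k then e' j - d j else 0) \<noteq> 0}"
      proof (rule finite_subset[of _ "{..<k}"])
        have dz: "d j = 0" if "k \<le> j" for j using dD that unfolding D_def by blast
        show "{j. d j \<noteq> 0 \<or> (if j < k then e' j - d j else 0) \<noteq> 0} \<subseteq> {..<k}"
        proof
          fix j assume j: "j \<in> {j. d j \<noteq> 0 \<or> (if j < k then e' j - d j else 0) \<noteq> 0}"
          show "j \<in> {..<k}"
          proof (rule ccontr)
            assume "j \<notin> {..<k}"
            then have jk: "\<not> j < k" "k \<le> j" by auto
            then have dj: "d j = 0" using dz by blast
            have ij: "(if j < k then e' j - d j else 0) = 0" by (rule trans[OF if_not_P[OF jk(1)]]) (rule refl)
            from j have "d j \<noteq> 0 \<or> (if j < k then e' j - d j else 0) \<noteq> 0" by blast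
            with dj ij show False by blast
          qed
        qed
      qed (rule finite_lessThan)
      have dD': "\<forall>j. (j < k \<longrightarrow> d j \<le> e' j) \<and> (k \<le> j \<longrightarrow> d j = 0)"
        using dD unfolding D_def by simp
      have eq: "(\<forall>j. (if j < k then e' j - d j else 0) = 0) \<longleftrightarrow> d = d0"
        unfolding d0_def by (rule eq_d0[OF dD'])
      have U1: "U 0 (e' k) (e' k) 0 = 1" using Up0[OF B T] by simp
      have hw: "h w = f (\<lambda>j. if j < k then d j else if j = k then 0 else if j = Suc k then e' k else e' j)
          * (if d = d0 then 1 else 0)"
        unfolding h_def wd using True by (simp only: z U1 passL_one[OF B fin] eq prod.case)
      show ?thesis
      proof (cases "d = d0")
        case True2: True
        have "(\<lambda>j. if j < k then d j else if j = k then 0 else if j = Suc k then e' k else e' j) = sw"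
          unfolding True2 d0_def sw_def by (rule ext) simp
        then show ?thesis using hw True2 True wd by simp
      next
        case False
        then show ?thesis using hw wd by simp
      qed
    qed
  qed
  have mem: "(d0, 0, e' k) \<in> D \<times> Z"
    using Up0[OF B T, of 0 "e' k" "e' k"] z unfolding D_def Z_def d0_def by auto
  have "Ups_at \<phi> U k f e' = sum h (D \<times> Z)"
    unfolding Ups_at_def D_def Z_def h_def by simp
  also have "\<dots> = (\<Sum>w\<in>D \<times> Z. if w = (d0, 0, e' k) then f sw else 0)"
    by (rule sum.cong) (auto simp: hz)
  also have "\<dots> = f sw" using finD finZ mem by simp
  finally show ?thesis unfolding sw_def .
qed

definition of_list :: "nat list \<Rightarrow> nat \<Rightarrow> nat" where
  "of_list L = (\<lambda>j. if j < length L then L ! j else 0)"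

lemma sym_swap:
  assumes B: "B_module_algebra \<phi>" and T: "triangular \<phi> U" and f: "f \<in> Sym_inf \<phi> U"
  shows "f (of_list (xs @ 0 # y # ys)) = f (of_list (xs @ y # 0 # ys))"
proof -
  let ?k = "length xs"
  let ?e = "of_list (xs @ y # 0 # ys)"
  have z: "?e (Suc ?k) = 0" unfolding of_list_def by (simp add: nth_append)
  have inv: "Ups_at \<phi> U ?k f = f" using f unfolding Sym_inf_def by blast
  have sw: "(\<lambda>j. if j < ?k then ?e j else if j = ?k then 0 else if j = Suc ?k then ?e ?k else ?e j)
      = of_list (xs @ 0 # y # ys)"
  proof (rule ext)
    fix j
    show "(if j < ?k then ?e j else if j = ?k then 0 else if j = Suc ?k then ?e ?k else ?e j)
      = of_list (xs @ 0 # y # ys) j"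
    proof (cases "j < ?k")
      case True then show ?thesis unfolding of_list_def by (simp add: nth_append)
    next
      case False
      then obtain i where i: "j = ?k + i" by (metis le_add_diff_inverse not_less)
      show ?thesis unfolding of_list_def i
        by (cases i; cases "i - 1"; simp add: nth_append)
    qed
  qed
  have "f ?e = Ups_at \<phi> U ?k f ?e" using inv by simp
  also have "\<dots> = f (of_list (xs @ 0 # y # ys))" using Ups_swap[where k="length xs" and f=f and e'="of_list (xs @ y # 0 # ys)", OF B T z] sw by simp
  finally show ?thesis by simp
qed

lemma of_list_snoc0: "of_list (xs @ [0]) = of_list xs"
  unfolding of_list_def by (rule ext) (simp add: nth_append)

lemma sym_zero:
  assumes B: "B_module_algebra \<phi>" and T: "triangular \<phi> U" and f: "f \<in> Sym_inf \<phi> U"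
  shows "f (of_list (xs @ 0 # ys)) = f (of_list (xs @ ys))"
proof (induction ys arbitrary: xs)
  case Nil then show ?case using of_list_snoc0 by simp
next
  case (Cons y ys)
  have "f (of_list (xs @ 0 # y # ys)) = f (of_list ((xs @ [y]) @ 0 # ys))"
    using sym_swap[OF B T f] by simp
  also have "\<dots> = f (of_list ((xs @ [y]) @ ys))" by (rule Cons)
  finally show ?case by simp
qed

lemma sym_filter:
  assumes B: "B_module_algebra \<phi>" and T: "triangular \<phi> U" and f: "f \<in> Sym_inf \<phi> U"
  shows "f (of_list (xs @ L)) = f (of_list (xs @ filter (\<lambda>x. x \<noteq> 0) L))"
proof (induction L arbitrary: xs)
  case Nil then show ?case by simp
next
  case (Cons y L)
  show ?case
  proof (cases "y = 0")
    case True
    then show ?thesis using sym_zero[OF B T f, of xs L] Cons[of xs] by simp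
  next
    case False
    then show ?thesis using Cons[of "xs @ [y]"] by simp
  qed
qed

lemma fin_supp_list:
  assumes "fin_supp e"
  shows "\<exists>N. e = of_list (map e [0..<N]) \<and> comp_of e = filter (\<lambda>x. x \<noteq> 0) (map e [0..<N])"
proof -
  obtain N where N0: "\<forall>n\<in>{j. e j \<noteq> 0}. n < N"
    using assms finite_nat_set_iff_bounded unfolding fin_supp_def by blast
  then have N: "{j. e j \<noteq> 0} \<subseteq> {..<N}" by auto
  have e: "e = of_list (map e [0..<N])"
    unfolding of_list_def by (rule ext) (use N in auto)
  have S: "{j. e j \<noteq> 0} = set (filter (\<lambda>j. e j \<noteq> 0) [0..<N])" using N by auto
  have "sorted_list_of_set {j. e j \<noteq> 0} = filter (\<lambda>j. e j \<noteq> 0) [0..<N]"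
    unfolding S sorted_list_of_set_sort_remdups
    by (metis distinct_filter distinct_upt distinct_remdups_id sorted_sort_id sorted_upt sorted_wrt_filter)
  then have "comp_of e = filter (\<lambda>x. x \<noteq> 0) (map e [0..<N])"
    unfolding comp_of_def by (simp add: filter_map comp_def)
  with e show ?thesis by blast
qed

theorem mainTheorem10:
  fixes \<phi> :: "nat \<Rightarrow> 'r::ring_1 \<Rightarrow> 'r"
    and U :: "nat \<Rightarrow> nat \<Rightarrow> nat \<Rightarrow> nat \<Rightarrow> 'r"
  assumes "B_module_algebra \<phi>"
    and "strict_triangular \<phi> U"
  shows "Sym_inf \<phi> U \<subseteq> QSym"
proof
  fix f assume f: "f \<in> Sym_inf \<phi> U"
  have B: "B_module_algebra \<phi>" by (rule assms(1))
  have T: "triangular \<phi> U" using assms(2) unfolding strict_triangular_def by blast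
  have "f = qsym_comb (\<lambda>I. f (of_list I))"
  proof (rule ext)
    fix e
    show "f e = qsym_comb (\<lambda>I. f (of_list I)) e"
    proof (cases "fin_supp e")
      case False
      then have "f e = 0" using f unfolding Sym_inf_def is_series_def by blast
      then show ?thesis using False unfolding qsym_comb_def m_qsym_def by simp
    next
      case True
      obtain N where N: "e = of_list (map e [0..<N])"
        "comp_of e = filter (\<lambda>x. x \<noteq> 0) (map e [0..<N])"
        using fin_supp_list[OF True] by blast
      have "f e = f (of_list (map e [0..<N]))" by (rule arg_cong[OF N(1)])
      also have "\<dots> = f (of_list (comp_of e))"
        using sym_filter[OF B T f, of "[]" "map e [0..<N]"] N(2) by simp
      finally show ?thesis using True unfolding qsym_comb_def m_qsym_def by simp
    qed
  qed
  then show "f \<in> QSym" unfolding QSym_def by blast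
qed

end
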